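(* For every command $c$ and store $\sigma$ of the While-language: $(c,\sigma)\Rightarrow^\infty$ if and only if $(c,\sigma)\Downarrow^{co}\mathsf{div}$.
   Context: While-language syntax: variables $x$ range over a countably infinite set $\mathit{Var}$; $n$ ranges over natural numbers; values are $v ::= \mathsf{null}\mid n$ ($\mathsf{null}$ distinct from every natural number); expressions are $e ::= v\mid x\mid e_1\oplus e_2$ with $\oplus\in\{+,-,*\}$, where $\oplus(n_1,n_2)$ is the result of the operation on naturals; commands are $c ::= \mathsf{skip}\mid\mathsf{alloc}\ x\mid x:=e\mid c_1;c_2\mid \mathsf{if}\ e\ c_1\ c_2\mid\mathsf{while}\ e\ c$. A store $\sigma$ is a finite partial map from $\mathit{Var}$ to values, with domain $\mathrm{dom}(\sigma)$, lookup $\sigma(x)$, update $\sigma[x\mapsto v]$. Expression evaluation $(e,\sigma)\Rightarrow_E v$ is the least relation with: $(v,\sigma)\Rightarrow_E v$; $(x,\sigma)\Rightarrow_E\sigma(x)$ if $x\in\mathrm{dom}(\sigma)$; if $(e_1,\sigma)\Rightarrow_E n_1$ and $(e_2,\sigma)\Rightarrow_E n_2$ with $n_1,n_2$ naturals then $(e_1\oplus e_2,\sigma)\Rightarrow_E\oplus(n_1,n_2)$. Big-step relation $(c,\sigma)\Rightarrow_B\sigma'$ is the least relation with: $(\mathsf{skip},\sigma)\Rightarrow_B\sigma$; $(\mathsf{alloc}\ x,\sigma)\Rightarrow_B\sigma[x\mapsto\mathsf{null}]$ if $x\notin\mathrm{dom}(\sigma)$; $(x:=e,\sigma)\Rightarrow_B\sigma[x\mapsto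 v]$ if $x\in\mathrm{dom}(\sigma)$ and $(e,\sigma)\Rightarrow_E v$; $(c_1;c_2,\sigma)\Rightarrow_B\sigma''$ if $(c_1,\sigma)\Rightarrow_B\sigma'$ and $(c_2,\sigma')\Rightarrow_B\sigma''$; $(\mathsf{if}\ e\ c_1\ c_2,\sigma)\Rightarrow_B\sigma'$ if $(e,\sigma)\Rightarrow_E v$, $v\ne0$, $(c_1,\sigma)\Rightarrow_B\sigma'$; $(\mathsf{if}\ e\ c_1\ c_2,\sigma)\Rightarrow_B\sigma'$ if $(e,\sigma)\Rightarrow_E0$, $(c_2,\sigma)\Rightarrow_B\sigma'$; $(\mathsf{while}\ e\ c,\sigma)\Rightarrow_B\sigma''$ if $(e,\sigma)\Rightarrow_E v$, $v\ne0$, $(c,\sigma)\Rightarrow_B\sigma'$, $(\mathsf{while}\ e\ c,\sigma')\Rightarrow_B\sigma''$; $(\mathsf{while}\ e\ c,\sigma)\Rightarrow_B\sigma$ if $(e,\sigma)\Rightarrow_E0$. The big-step divergence predicate $(c,\sigma)\Rightarrow^\infty$ is the greatest predicate such that every element is the conclusion of an instance of one of these rules whose $\Rightarrow^\infty$-premises are in it: $(c_1,\sigma)\Rightarrow^\infty$ gives $(c_1;c_2,\sigma)\Rightarrow^\infty$; $(c_1,\sigma)\Rightarrow_B\sigma'$ and $(c_2,\sigma')\Rightarrow^\infty$ give $(c_1;c_2,\sigma)\Rightarrow^\infty$; $(e,\sigma)\Rightarrow_E v$, $v\ne0$, $(c_1,\sigma)\Rightarrow^\infty$ give $(\mathsf{if}\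 e\ c_1\ c_2,\sigma)\Rightarrow^\infty$; $(e,\sigma)\Rightarrow_E0$, $(c_2,\sigma)\Rightarrow^\infty$ give $(\mathsf{if}\ e\ c_1\ c_2,\sigma)\Rightarrow^\infty$; $(e,\sigma)\Rightarrow_E v$, $v\ne0$, $(c,\sigma)\Rightarrow^\infty$ give $(\mathsf{while}\ e\ c,\sigma)\Rightarrow^\infty$; $(e,\sigma)\Rightarrow_E v$, $v\ne0$, $(c,\sigma)\Rightarrow_B\sigma'$, $(\mathsf{while}\ e\ c,\sigma')\Rightarrow^\infty$ give $(\mathsf{while}\ e\ c,\sigma)\Rightarrow^\infty$. Pretty-big-step semantics: outcomes $o ::= \mathsf{conv}\ \sigma\mid\mathsf{div}$; semantic commands $C ::= c\mid\mathsf{assign2}\ x\ v\mid\mathsf{seq2}\ o\ c\mid\mathsf{if2}\ v\ c\ c\mid\mathsf{while2}\ v\ e\ c\mid\mathsf{while3}\ o\ e\ c$. The rules for judgments $(C,\sigma)\Downarrow o$ are: $(\mathsf{skip},\sigma)\Downarrow\mathsf{conv}\ \sigma$; $(\mathsf{alloc}\ x,\sigma)\Downarrow\mathsf{conv}\ \sigma[x\mapsto\mathsf{null}]$ if $x\notin\mathrm{dom}(\sigma)$; $(x:=e,\sigma)\Downarrow o$ if $(e,\sigma)\Rightarrow_E v$ and $(\mathsf{assign2}\ x\ v,\sigma)\Downarrow o$; $(\mathsf{assign2}\ x\ v,\sigma)\Downarrow\mathsf{conv}\ \sigma[x\mapsto v]$ if $x\in\mathrm{dom}(\sigma)$; $(c_1;c_2,\sigma)\Downarrow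 o$ if $(c_1,\sigma)\Downarrow o_1$ and $(\mathsf{seq2}\ o_1\ c_2,\sigma)\Downarrow o$; $(\mathsf{seq2}\ (\mathsf{conv}\ \sigma)\ c,\sigma_0)\Downarrow o$ if $(c,\sigma)\Downarrow o$; $(\mathsf{if}\ e\ c_1\ c_2,\sigma)\Downarrow o$ if $(e,\sigma)\Rightarrow_E v$ and $(\mathsf{if2}\ v\ c_1\ c_2,\sigma)\Downarrow o$; $(\mathsf{if2}\ v\ c_1\ c_2,\sigma)\Downarrow o_1$ if $v\ne0$ and $(c_1,\sigma)\Downarrow o_1$; $(\mathsf{if2}\ 0\ c_1\ c_2,\sigma)\Downarrow o_2$ if $(c_2,\sigma)\Downarrow o_2$; $(\mathsf{while}\ e\ c,\sigma)\Downarrow o$ if $(e,\sigma)\Rightarrow_E v$ and $(\mathsf{while2}\ v\ e\ c,\sigma)\Downarrow o$; $(\mathsf{while2}\ v\ e\ c,\sigma)\Downarrow o'$ if $v\ne0$, $(c,\sigma)\Downarrow o$ and $(\mathsf{while3}\ o\ e\ c,\sigma)\Downarrow o'$; $(\mathsf{while2}\ 0\ e\ c,\sigma)\Downarrow\mathsf{conv}\ \sigma$; $(\mathsf{while3}\ (\mathsf{conv}\ \sigma)\ e\ c,\sigma_0)\Downarrow o$ if $(\mathsf{while}\ e\ c,\sigma)\Downarrow o$; $(\mathsf{seq2}\ \mathsf{div}\ c_2,\sigma)\Downarrow\mathsf{div}$; $(\mathsf{while3}\ \mathsf{div}\ e\ c,\sigma)\Downarrow\mathsf{div}$. $\Downarrow^{co}$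 denotes the coinductive interpretation of these same rules: the greatest relation such that every element is the conclusion of a rule instance whose $\Downarrow$-premises lie in it ($\Rightarrow_E$ premises keep their meaning). *)

theory Defs
  imports Main
begin

type_synonym vname = nat  (* Var: countably infinite *)

datatype val = Null | Nat nat

datatype binop = Plus | Minus | Times

datatype expr = V val | Var vname | BinOp binop expr expr

datatype com = Skip | Alloc vname | Assign vname expr | Seq com com
  | If expr com com | While expr com

type_synonym store = "vname \<rightharpoonup> val"

fun apply_op :: "binop \<Rightarrow> nat \<Rightarrow> nat \<Rightarrow> nat" where
  "apply_op Plus a b = a + b"
| "apply_op Minus a b = a - b"
| "apply_op Times a b = a * b"

inductive evalE :: "expr \<Rightarrow> store \<Rightarrow> val \<Rightarrow> bool" where
  "evalE (V v) \<sigma> v"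
| "\<sigma> x = Some v \<Longrightarrow> evalE (Var x) \<sigma> v"
| "evalE e1 \<sigma> (Nat n1) \<Longrightarrow> evalE e2 \<sigma> (Nat n2) \<Longrightarrow>
     evalE (BinOp op e1 e2) \<sigma> (Nat (apply_op op n1 n2))"

inductive bigstep :: "com \<Rightarrow> store \<Rightarrow> store \<Rightarrow> bool" where
  "bigstep Skip \<sigma> \<sigma>"
| "x \<notin> dom \<sigma> \<Longrightarrow> bigstep (Alloc x) \<sigma> (\<sigma>(x \<mapsto> Null))"
| "x \<in> dom \<sigma> \<Longrightarrow> evalE e \<sigma> v \<Longrightarrow> bigstep (Assign x e) \<sigma> (\<sigma>(x \<mapsto> v))"
| "bigstep c1 \<sigma> \<sigma>' \<Longrightarrow> bigstep c2 \<sigma>' \<sigma>'' \<Longrightarrow> bigstep (Seq c1 c2) \<sigma> \<sigma>''"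
| "evalE e \<sigma> v \<Longrightarrow> v \<noteq> Nat 0 \<Longrightarrow> bigstep c1 \<sigma> \<sigma>' \<Longrightarrow> bigstep (If e c1 c2) \<sigma> \<sigma>'"
| "evalE e \<sigma> (Nat 0) \<Longrightarrow> bigstep c2 \<sigma> \<sigma>' \<Longrightarrow> bigstep (If e c1 c2) \<sigma> \<sigma>'"
| "evalE e \<sigma> v \<Longrightarrow> v \<noteq> Nat 0 \<Longrightarrow> bigstep c \<sigma> \<sigma>' \<Longrightarrow> bigstep (While e c) \<sigma>' \<sigma>''
     \<Longrightarrow> bigstep (While e c) \<sigma> \<sigma>''"
| "evalE e \<sigma> (Nat 0) \<Longrightarrow> bigstep (While e c) \<sigma> \<sigma>"

coinductive bigdiv :: "com \<Rightarrow> store \<Rightarrow> bool" where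
  "bigdiv c1 \<sigma> \<Longrightarrow> bigdiv (Seq c1 c2) \<sigma>"
| "bigstep c1 \<sigma> \<sigma>' \<Longrightarrow> bigdiv c2 \<sigma>' \<Longrightarrow> bigdiv (Seq c1 c2) \<sigma>"
| "evalE e \<sigma> v \<Longrightarrow> v \<noteq> Nat 0 \<Longrightarrow> bigdiv c1 \<sigma> \<Longrightarrow> bigdiv (If e c1 c2) \<sigma>"
| "evalE e \<sigma> (Nat 0) \<Longrightarrow> bigdiv c2 \<sigma> \<Longrightarrow> bigdiv (If e c1 c2) \<sigma>"
| "evalE e \<sigma> v \<Longrightarrow> v \<noteq> Nat 0 \<Longrightarrow> bigdiv c \<sigma> \<Longrightarrow> bigdiv (While e c) \<sigma>"
| "evalE e \<sigma> v \<Longrightarrow> v \<noteq> Nat 0 \<Longrightarrow> bigstep c \<sigma> \<sigma>' \<Longrightarrow> bigdiv (While e c) \<sigma>'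
     \<Longrightarrow> bigdiv (While e c) \<sigma>"

datatype outcome = Conv store | Div

datatype scom = Cmd com | Assign2 vname val | Seq2 outcome com
  | If2 val com com | While2 val expr com | While3 outcome expr com

coinductive pbs_co :: "scom \<Rightarrow> store \<Rightarrow> outcome \<Rightarrow> bool" where
  "pbs_co (Cmd Skip) \<sigma> (Conv \<sigma>)"
| "x \<notin> dom \<sigma> \<Longrightarrow> pbs_co (Cmd (Alloc x)) \<sigma> (Conv (\<sigma>(x \<mapsto> Null)))"
| "evalE e \<sigma> v \<Longrightarrow> pbs_co (Assign2 x v) \<sigma> r \<Longrightarrow> pbs_co (Cmd (Assign x e)) \<sigma> r"
| "x \<in> dom \<sigma> \<Longrightarrow> pbs_co (Assign2 x v) \<sigma> (Conv (\<sigma>(x \<mapsto> v)))"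
| "pbs_co (Cmd c1) \<sigma> r1 \<Longrightarrow> pbs_co (Seq2 r1 c2) \<sigma> r \<Longrightarrow> pbs_co (Cmd (Seq c1 c2)) \<sigma> r"
| "pbs_co (Cmd c) \<sigma> r \<Longrightarrow> pbs_co (Seq2 (Conv \<sigma>) c) \<sigma>0 r"
| "evalE e \<sigma> v \<Longrightarrow> pbs_co (If2 v c1 c2) \<sigma> r \<Longrightarrow> pbs_co (Cmd (If e c1 c2)) \<sigma> r"
| "v \<noteq> Nat 0 \<Longrightarrow> pbs_co (Cmd c1) \<sigma> r1 \<Longrightarrow> pbs_co (If2 v c1 c2) \<sigma> r1"
| "pbs_co (Cmd c2) \<sigma> r2 \<Longrightarrow> pbs_co (If2 (Nat 0) c1 c2) \<sigma> r2"
| "evalE e \<sigma> v \<Longrightarrow> pbs_co (While2 v e c) \<sigma> r \<Longrightarrow> pbs_co (Cmd (While e c)) \<sigma> r"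
| "v \<noteq> Nat 0 \<Longrightarrow> pbs_co (Cmd c) \<sigma> r \<Longrightarrow> pbs_co (While3 r e c) \<sigma> r'
     \<Longrightarrow> pbs_co (While2 v e c) \<sigma> r'"
| "pbs_co (While2 (Nat 0) e c) \<sigma> (Conv \<sigma>)"
| "pbs_co (Cmd (While e c)) \<sigma> r \<Longrightarrow> pbs_co (While3 (Conv \<sigma>) e c) \<sigma>0 r"
| "pbs_co (Seq2 Div c2) \<sigma> Div"
| "pbs_co (While3 Div e c) \<sigma> Div"

end

theory Submission
  imports Defs
begin

inductive_cases pc_Skip: "pbs_co (Cmd Skip) s r"
inductive_cases pc_Alloc: "pbs_co (Cmd (Alloc x)) s r"
inductive_cases pc_Assign: "pbs_co (Cmd (Assign x e)) s r"
inductive_cases pc_Assign2: "pbs_co (Assign2 x v) s r"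
inductive_cases pc_Seq: "pbs_co (Cmd (Seq c1 c2)) s r"
inductive_cases pc_Seq2: "pbs_co (Seq2 r1 c) s r"
inductive_cases pc_If: "pbs_co (Cmd (If e c1 c2)) s r"
inductive_cases pc_If2: "pbs_co (If2 v c1 c2) s r"
inductive_cases pc_While: "pbs_co (Cmd (While e c)) s r"
inductive_cases pc_While2: "pbs_co (While2 v e c) s r"
inductive_cases pc_While3: "pbs_co (While3 r1 e c) s r"

lemma evalE_det: "evalE e s v \<Longrightarrow> evalE e s v' \<Longrightarrow> v = v'"
proof (induction arbitrary: v' rule: evalE.induct)
  case (1 v \<sigma>) then show ?case by (auto elim: evalE.cases)
next
  case (2 \<sigma> x v) then show ?case by (auto elim: evalE.cases)
next
  case (3 e1 \<sigma> n1 e2 n2 op) then show ?case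
    by (auto elim!: evalE.cases[of "BinOp op e1 e2"])
qed

lemma bs_pbs: "bigstep c s s' \<Longrightarrow> pbs_co (Cmd c) s (Conv s')"
  by (induction rule: bigstep.induct) (blast intro: pbs_co.intros)+

lemma bs_det: "bigstep c s s' \<Longrightarrow> pbs_co (Cmd c) s r \<Longrightarrow> r = Conv s'"
proof (induction arbitrary: r rule: bigstep.induct)
  case (1 \<sigma>) then show ?case by (auto elim: pc_Skip)
next
  case (2 x \<sigma>) then show ?case by (erule_tac pc_Alloc) auto
next
  case (3 x \<sigma> e v) then show ?case
    by (elim pc_Assign pc_Assign2) (metis evalE_det)
next
  case (4 c1 \<sigma> \<sigma>' c2 \<sigma>'')
  from 4(5) obtain r1 where a: "pbs_co (Cmd c1) \<sigma> r1" and b: "pbs_co (Seq2 r1 c2) \<sigma> r"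
    by (rule pc_Seq)
  from a 4(3) have "r1 = Conv \<sigma>'" by blast
  with b have "pbs_co (Cmd c2) \<sigma>' r" by (auto elim: pc_Seq2)
  with 4(4) show ?case by blast
next
  case (5 e \<sigma> v c1 \<sigma>' c2)
  from 5(5) obtain v' where a: "evalE e \<sigma> v'" and b: "pbs_co (If2 v' c1 c2) \<sigma> r"
    by (rule pc_If)
  from a 5(1) have "v' = v" using evalE_det by blast
  with b 5(2) have "pbs_co (Cmd c1) \<sigma> r" by (auto elim: pc_If2)
  with 5(4) show ?case by blast
next
  case (6 e \<sigma> c2 \<sigma>' c1)
  from 6(4) obtain v' where a: "evalE e \<sigma> v'" and b: "pbs_co (If2 v' c1 c2) \<sigma> r"
    by (rule pc_If)
  from a 6(1) have "v' = Nat 0" using evalE_det by blast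
  with b have "pbs_co (Cmd c2) \<sigma> r" by (auto elim: pc_If2)
  with 6(3) show ?case by blast
next
  case (7 e \<sigma> v c \<sigma>' \<sigma>'')
  from 7(7) obtain v' where a: "evalE e \<sigma> v'" and b: "pbs_co (While2 v' e c) \<sigma> r"
    by (rule pc_While)
  from a 7(1) have "v' = v" using evalE_det by blast
  with b 7(2) obtain r1 where c: "pbs_co (Cmd c) \<sigma> r1" and d: "pbs_co (While3 r1 e c) \<sigma> r"
    by (auto elim: pc_While2)
  from c 7(5) have "r1 = Conv \<sigma>'" by blast
  with d have "pbs_co (Cmd (While e c)) \<sigma>' r" by (auto elim: pc_While3)
  with 7(6) show ?case by blast
next
  case (8 e \<sigma> c)
  from 8(2) obtain v' where a: "evalE e \<sigma> v'" and b: "pbs_co (While2 v' e c) \<sigma> r"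
    by (rule pc_While)
  from a 8(1) have "v' = Nat 0" using evalE_det by blast
  with b show ?case by (auto elim: pc_While2)
qed


lemma pbs_bigdiv:
  assumes "pbs_co (Cmd c) s r" "\<forall>s'. \<not> bigstep c s s'"
  shows "bigdiv c s"
  using assms
proof (coinduction arbitrary: c s r rule: bigdiv.coinduct)
  case (bigdiv c s r)
  note H = this
  show ?case
  proof (cases c)
    case Skip then show ?thesis using H by (auto intro: bigstep.intros)
  next
    case (Alloc x) then show ?thesis using H by (auto elim!: pc_Alloc intro: bigstep.intros)
  next
    case (Assign x e) then show ?thesis using H by (auto elim!: pc_Assign pc_Assign2 intro: bigstep.intros)
  next
    case (Seq c1 c2)
    from H(1) Seq obtain r1 where a: "pbs_co (Cmd c1) s r1" and b: "pbs_co (Seq2 r1 c2) s r"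
      by (auto elim: pc_Seq)
    show ?thesis
    proof (cases "\<exists>s'. bigstep c1 s s'")
      case True
      then obtain s' where t: "bigstep c1 s s'" by blast
      with a have "r1 = Conv s'" using bs_det by blast
      with b have "pbs_co (Cmd c2) s' r" by (auto elim: pc_Seq2)
      moreover have "\<forall>s''. \<not> bigstep c2 s' s''" using H(2) Seq t by (auto intro: bigstep.intros)
      ultimately show ?thesis apply - apply (rule disjI2, rule disjI1) using Seq t by blast
    next
      case False
      then show ?thesis apply - apply (rule disjI1) using Seq a by blast
    qed
  next
    case (If e c1 c2)
    from H(1) If obtain v where a: "evalE e s v" and b: "pbs_co (If2 v c1 c2) s r"
      by (auto elim: pc_If)
    show ?thesis
    proof (cases "v = Nat 0")
      case True
      with b have "pbs_co (Cmd c2) s r" by (auto elim: pc_If2)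
      moreover have "\<forall>s'. \<not> bigstep c2 s s'" using H(2) If a True by (auto intro: bigstep.intros)
      ultimately show ?thesis apply - apply (rule disjI2, rule disjI2, rule disjI2, rule disjI1) using If a True by blast
    next
      case False
      with b have "pbs_co (Cmd c1) s r" by (auto elim: pc_If2)
      moreover have "\<forall>s'. \<not> bigstep c1 s s'" using H(2) If a False by (auto intro: bigstep.intros)
      ultimately show ?thesis apply - apply (rule disjI2, rule disjI2, rule disjI1) using If a False by blast
    qed
  next
    case (While e c0)
    from H(1) While obtain v where a: "evalE e s v" and b: "pbs_co (While2 v e c0) s r"
      by (auto elim: pc_While)
    show ?thesis
    proof (cases "v = Nat 0")
      case True
      then show ?thesis using H(2) While a by (auto intro: bigstep.intros)
    next
      case False
      with b obtain r1 where c: "pbs_co (Cmd c0) s r1" and d: "pbs_co (While3 r1 e c0) s r"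
        by (auto elim: pc_While2)
      show ?thesis
      proof (cases "\<exists>s'. bigstep c0 s s'")
        case True
        then obtain s' where t: "bigstep c0 s s'" by blast
        with c have "r1 = Conv s'" using bs_det by blast
        with d have "pbs_co (Cmd (While e c0)) s' r" by (auto elim: pc_While3)
        moreover have "\<forall>s''. \<not> bigstep (While e c0) s' s''"
          using H(2) While t a False by (auto intro: bigstep.intros)
        ultimately show ?thesis apply - apply (rule disjI2, rule disjI2, rule disjI2, rule disjI2, rule disjI2) using While t a False by blast
      next
        case False
        then show ?thesis apply - apply (rule disjI2, rule disjI2, rule disjI2, rule disjI2, rule disjI1) using While a c \<open>v \<noteq> Nat 0\<close> by blast
      qed
    qed
  qed
qed


definition XD :: "scom \<Rightarrow> store \<Rightarrow> outcome \<Rightarrow> bool" where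
  "XD S s r \<longleftrightarrow> r = Div \<and> (
     (\<exists>c. S = Cmd c \<and> bigdiv c s) \<or>
     (\<exists>c. S = Seq2 Div c) \<or>
     (\<exists>s' c. S = Seq2 (Conv s') c \<and> bigdiv c s') \<or>
     (\<exists>v c1 c2. S = If2 v c1 c2 \<and> ((v \<noteq> Nat 0 \<and> bigdiv c1 s) \<or> (v = Nat 0 \<and> bigdiv c2 s))) \<or>
     (\<exists>v e c. S = While2 v e c \<and> v \<noteq> Nat 0 \<and> (bigdiv c s \<or> (\<exists>s'. bigstep c s s' \<and> bigdiv (While e c) s'))) \<or>
     (\<exists>e c. S = While3 Div e c) \<or>
     (\<exists>s' e c. S = While3 (Conv s') e c \<and> bigdiv (While e c) s'))"

lemma XD_pbs: "XD S s r \<Longrightarrow> pbs_co S s r"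
  apply (erule pbs_co.coinduct)
  apply (unfold XD_def)
  apply (elim conjE disjE exE)
  apply simp_all
    apply (erule bigdiv.cases; blast intro: bs_pbs)
   apply blast
  apply (blast intro: bs_pbs)
  done


theorem theorem13:
  fixes c :: com and \<sigma> :: store
  assumes "finite (dom \<sigma>)"
  shows "bigdiv c \<sigma> \<longleftrightarrow> pbs_co (Cmd c) \<sigma> Div"
proof
  assume "bigdiv c \<sigma>"
  then have "XD (Cmd c) \<sigma> Div" unfolding XD_def by blast
  then show "pbs_co (Cmd c) \<sigma> Div" by (rule XD_pbs)
next
  assume h: "pbs_co (Cmd c) \<sigma> Div"
  have "\<forall>s'. \<not> bigstep c \<sigma> s'" using h bs_det by blast
  with h show "bigdiv c \<sigma>" by (rule pbs_bigdiv)
qed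

end
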